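(* Let $\mathrm{X}$ be a reflexive Banach space, let $\ell$ be a Schauder sequence space such that $\ell^*$ is also a Schauder sequence space, and let $F=\{f_i\}\subset\mathrm{X}$, $G=\{g_i\}\subset\mathrm{X}^*$. Then $(G,F)$ is an $(\ell,\ell^* )$-atomic decomposition for $\mathrm{X}$ if and only if $(F,G)$ is an $(\ell^*,\ell)$-atomic decomposition for $\mathrm{X}^*$.
   Context: $\mathrm{X}^{**}$ is identified with $\mathrm{X}$ and $\langle f,g\rangle:=g(f)$. A BK-space is a Banach space of scalar sequences indexed by $\mathbb{N}$ with continuous coordinate functionals; a Schauder sequence space is a BK-space in which the canonical vectors $\delta_i$ form a Schauder basis, and then $\ell^*$ is identified isometrically with the sequence space $\{\{\phi(\delta_i)\}:\phi\in\ell^*\}$, acting by $\phi(\{c_i\})=\sum_i\phi(\delta_i)c_i$ (and $\ell\subset\ell^{**}$ in the same way). $(G,F)$ is an $(\ell,\ell^* )$-atomic decomposition for $\mathrm{X}$ if there are $A,B>0$ such that for all $f\in\mathrm{X}$: $\{\langle f,g_i\rangle\}\in\ell$, $A\|f\|\le\|\{\langle f,g_i\rangle\}\|_\ell\le B\|f\|$, and $f=\sum_i\langle f,g_i\rangle f_i$; and moreover $F$ is an $\ell^*$-Bessel for $\mathrm{X}^*$, i.e. there is $B'>0$ with $\{\langle f_i,g\rangle\}\in\ell^*$ and $\|\{\langle f_i,g\rangle\}\|_{\ell^*}\le B'\|g\|$ for all $g\in\mathrm{X}^*$. $(F,G)$ is an $(\ell^*,\ell)$-atomic decomposition for $\mathrm{X}^*$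 if there are $A,B>0$ such that for all $g\in\mathrm{X}^*$: $\{\langle f_i,g\rangle\}\in\ell^*$, $A\|g\|\le\|\{\langle f_i,g\rangle\}\|_{\ell^*}\le B\|g\|$, and $g=\sum_i\langle f_i,g\rangle g_i$; and moreover $G$ is an $\ell$-Bessel for $\mathrm{X}$, i.e. there is $B'>0$ with $\{\langle f,g_i\rangle\}\in\ell$ and $\|\{\langle f,g_i\rangle\}\|_\ell\le B'\|f\|$ for all $f\in\mathrm{X}$. *)

theory Defs
  imports "HOL-Analysis.Analysis"
begin

(* Scalars are real. Sequences are functions nat => real. A sequence space is
   given as a carrier set L together with a norm function N on it. *)

definition canon_vec :: "nat \<Rightarrow> nat \<Rightarrow> real" ("\<delta>") where
  "\<delta> i = (\<lambda>j. if j = i then 1 else 0)"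

definition BK_space :: "(nat \<Rightarrow> real) set \<Rightarrow> ((nat \<Rightarrow> real) \<Rightarrow> real) \<Rightarrow> bool" where
  "BK_space L N \<longleftrightarrow>
     (\<lambda>_. 0) \<in> L \<and>
     (\<forall>c\<in>L. \<forall>d\<in>L. (\<lambda>i. c i + d i) \<in> L) \<and>
     (\<forall>c\<in>L. \<forall>a. (\<lambda>i. a * c i) \<in> L) \<and>
     (\<forall>c\<in>L. N c \<ge> 0 \<and> (N c = 0 \<longleftrightarrow> c = (\<lambda>_. 0))) \<and>
     (\<forall>c\<in>L. \<forall>a. N (\<lambda>i. a * c i) = \<bar>a\<bar> * N c) \<and>
     (\<forall>c\<in>L. \<forall>d\<in>L. N (\<lambda>i. c i + d i) \<le> N c + N d) \<and>
     \<comment> \<open>completeness: every Cauchy sequence converges in L\<close>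
     (\<forall>s. (\<forall>n. s n \<in> L) \<longrightarrow>
          (\<forall>e>0. \<exists>M. \<forall>m\<ge>M. \<forall>n\<ge>M. N (\<lambda>i. s m i - s n i) < e) \<longrightarrow>
          (\<exists>c\<in>L. (\<lambda>n. N (\<lambda>i. s n i - c i)) \<longlonglongrightarrow> 0)) \<and>
     \<comment> \<open>continuous coordinate functionals\<close>
     (\<forall>i. \<exists>K. \<forall>c\<in>L. \<bar>c i\<bar> \<le> K * N c)"

(* Schauder sequence space: BK-space in which the canonical vectors form a
   Schauder basis, i.e. every c in L is the N-limit of its truncations
   sum_{i<n} c_i delta_i (coefficients are unique by continuity of coordinates). *)
definition Schauder_seq_space :: "(nat \<Rightarrow> real) set \<Rightarrow> ((nat \<Rightarrow> real) \<Rightarrow> real) \<Rightarrow> bool" where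
  "Schauder_seq_space L N \<longleftrightarrow>
     BK_space L N \<and> (\<forall>i. \<delta> i \<in> L) \<and>
     (\<forall>c\<in>L. (\<lambda>n. N (\<lambda>j. c j - (\<Sum>i<n. c i * \<delta> i j))) \<longlonglongrightarrow> 0)"

(* The dual ell^* of a Schauder sequence space, identified with the sequences
   {phi(delta_i)} for bounded linear functionals phi on (L,N). *)
definition dual_seq :: "(nat \<Rightarrow> real) set \<Rightarrow> ((nat \<Rightarrow> real) \<Rightarrow> real) \<Rightarrow> (nat \<Rightarrow> real) set" where
  "dual_seq L N = {d. \<exists>\<phi>.
       (\<forall>c\<in>L. \<forall>c'\<in>L. \<phi> (\<lambda>i. c i + c' i) = \<phi> c + \<phi> c') \<and>
       (\<forall>c\<in>L. \<forall>a. \<phi> (\<lambda>i. a * c i) = a * \<phi> c) \<and>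
       (\<exists>K. \<forall>c\<in>L. \<bar>\<phi> c\<bar> \<le> K * N c) \<and>
       (\<forall>i. \<phi> (\<delta> i) = d i)}"

definition dual_norm :: "(nat \<Rightarrow> real) set \<Rightarrow> ((nat \<Rightarrow> real) \<Rightarrow> real) \<Rightarrow> (nat \<Rightarrow> real) \<Rightarrow> real" where
  "dual_norm L N d = (SUP c\<in>{c\<in>L. N c \<le> 1}. \<bar>\<Sum>i. d i * c i\<bar>)"

definition canon_embed :: "'a::real_normed_vector \<Rightarrow> (('a \<Rightarrow>\<^sub>L real) \<Rightarrow>\<^sub>L real)" where
  "canon_embed x = Blinfun (\<lambda>g. blinfun_apply g x)"

definition reflexive_space :: "'a::real_normed_vector itself \<Rightarrow> bool" where
  "reflexive_space _ \<longleftrightarrow> surj (canon_embed :: 'a \<Rightarrow> _)"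

(* (G,F) is an (ell, ell^star)-atomic decomposition for X. Pairing <f,g> = g f. *)
definition atomic_decomp_X ::
  "(nat \<Rightarrow> real) set \<Rightarrow> ((nat \<Rightarrow> real) \<Rightarrow> real) \<Rightarrow>
   (nat \<Rightarrow> real) set \<Rightarrow> ((nat \<Rightarrow> real) \<Rightarrow> real) \<Rightarrow>
   (nat \<Rightarrow> ('a::real_normed_vector \<Rightarrow>\<^sub>L real)) \<Rightarrow> (nat \<Rightarrow> 'a) \<Rightarrow> bool" where
  "atomic_decomp_X L N Ls Ns g f \<longleftrightarrow>
     (\<exists>A B. A > 0 \<and> B > 0 \<and>
        (\<forall>x. (\<lambda>i. blinfun_apply (g i) x) \<in> L \<and>
             A * norm x \<le> N (\<lambda>i. blinfun_apply (g i) x) \<and> N (\<lambda>i. blinfun_apply (g i) x) \<le> B * norm x \<and>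
             (\<lambda>i. blinfun_apply (g i) x *\<^sub>R f i) sums x)) \<and>
     (\<exists>B'. B' > 0 \<and>
        (\<forall>h::'a \<Rightarrow>\<^sub>L real. (\<lambda>i. blinfun_apply h (f i)) \<in> Ls \<and> Ns (\<lambda>i. blinfun_apply h (f i)) \<le> B' * norm h))"

(* (F,G) is an (ell^star, ell)-atomic decomposition for X* (X** identified with X). *)
definition atomic_decomp_dual ::
  "(nat \<Rightarrow> real) set \<Rightarrow> ((nat \<Rightarrow> real) \<Rightarrow> real) \<Rightarrow>
   (nat \<Rightarrow> real) set \<Rightarrow> ((nat \<Rightarrow> real) \<Rightarrow> real) \<Rightarrow>
   (nat \<Rightarrow> 'a::real_normed_vector) \<Rightarrow> (nat \<Rightarrow> ('a \<Rightarrow>\<^sub>L real)) \<Rightarrow> bool" where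
  "atomic_decomp_dual Ls Ns L N f g \<longleftrightarrow>
     (\<exists>A B. A > 0 \<and> B > 0 \<and>
        (\<forall>h::'a \<Rightarrow>\<^sub>L real. (\<lambda>i. blinfun_apply h (f i)) \<in> Ls \<and>
             A * norm h \<le> Ns (\<lambda>i. blinfun_apply h (f i)) \<and> Ns (\<lambda>i. blinfun_apply h (f i)) \<le> B * norm h \<and>
             (\<lambda>i. blinfun_apply h (f i) *\<^sub>R g i) sums h)) \<and>
     (\<exists>B'. B' > 0 \<and>
        (\<forall>x. (\<lambda>i. blinfun_apply (g i) x) \<in> L \<and> N (\<lambda>i. blinfun_apply (g i) x) \<le> B' * norm x))"

end

theory Submission
  imports Defs
begin


definition hb_good :: "'a::real_normed_vector \<Rightarrow> ('a \<times> real) set \<Rightarrow> bool" where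
 "hb_good x0 G \<longleftrightarrow> (x0, norm x0) \<in> G \<and> (\<forall>x a b. (x,a)\<in>G \<longrightarrow> (x,b)\<in>G \<longrightarrow> a = b) \<and>
   (\<forall>x a y b. (x,a)\<in>G \<longrightarrow> (y,b)\<in>G \<longrightarrow> (x+y,a+b)\<in>G) \<and>
   (\<forall>x a r. (x,a)\<in>G \<longrightarrow> (r *\<^sub>R x, r*a)\<in>G) \<and> (\<forall>x a. (x,a)\<in>G \<longrightarrow> a \<le> norm x)"

lemma hb_chain:
  assumes C: "C \<in> chains {G. hb_good x0 G}" and ne: "C \<noteq> {}"
  shows "hb_good x0 (\<Union>C)"
proof -
  have sub: "\<And>G. G \<in> C \<Longrightarrow> hb_good x0 G" using chainsD2[OF C] by auto
  have two: "\<exists>G\<in>C. p \<in> G \<and> q \<in> G" if hp: "p \<in> \<Union>C" and hq: "q \<in> \<Union>C" for p q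
  proof -
    obtain G1 where "G1 \<in> C" "p \<in> G1" using hp by blast
    moreover obtain G2 where "G2 \<in> C" "q \<in> G2" using hq by blast
    ultimately show ?thesis using chainsD[OF C, of G1 G2] by blast
  qed
  obtain G0 where "G0 \<in> C" using ne by auto
  show ?thesis unfolding hb_good_def
  proof (intro conjI allI impI)
    show "(x0, norm x0) \<in> \<Union>C" using sub[OF \<open>G0\<in>C\<close>] \<open>G0\<in>C\<close> unfolding hb_good_def by auto
  next
    fix x a b assume "(x,a) \<in> \<Union>C" "(x,b) \<in> \<Union>C"
    then obtain G where "G\<in>C" "(x,a)\<in>G" "(x,b)\<in>G" using two by blast
    then show "a = b" using sub[of G] unfolding hb_good_def by blast
  next
    fix x a y b assume "(x,a) \<in> \<Union>C" "(y,b) \<in> \<Union>C"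
    then obtain G where "G\<in>C" "(x,a)\<in>G" "(y,b)\<in>G" using two by blast
    then show "(x+y,a+b) \<in> \<Union>C" using sub[of G] unfolding hb_good_def by blast
  next
    fix x a r assume "(x,a) \<in> \<Union>C"
    then obtain G where "G\<in>C" "(x,a)\<in>G" by blast
    then show "(r *\<^sub>R x, r*a) \<in> \<Union>C" using sub[of G] unfolding hb_good_def by blast
  next
    fix x a assume "(x,a) \<in> \<Union>C"
    then obtain G where "G\<in>C" "(x,a)\<in>G" by blast
    then show "a \<le> norm x" using sub[of G] unfolding hb_good_def by blast
  qed
qed

lemma hb_base:
  fixes x0 :: "'a::real_normed_vector"
  assumes "x0 \<noteq> 0"
  shows "hb_good x0 {(t *\<^sub>R x0, t * norm x0) | t. True}"
  unfolding hb_good_def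
proof (intro conjI allI impI)
  show "(x0, norm x0) \<in> {(t *\<^sub>R x0, t * norm x0) |t. True}" by (rule CollectI, rule exI[of _ 1]) simp
next
  fix x a b assume "(x, a) \<in> {(t *\<^sub>R x0, t * norm x0) |t. True}" "(x, b) \<in> {(t *\<^sub>R x0, t * norm x0) |t. True}"
  then obtain s t where "x = s *\<^sub>R x0" "a = s * norm x0" and "x = t *\<^sub>R x0" "b = t * norm x0" by blast
  then show "a = b" using assms by (metis scaleR_cancel_right)
next
  fix x a y b assume "(x, a) \<in> {(t *\<^sub>R x0, t * norm x0) |t. True}" "(y, b) \<in> {(t *\<^sub>R x0, t * norm x0) |t. True}"
  then obtain s t where "x = s *\<^sub>R x0" "a = s * norm x0" "y = t *\<^sub>R x0" "b = t * norm x0" by auto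
  then show "(x + y, a + b) \<in> {(t *\<^sub>R x0, t * norm x0) |t. True}"
    by (intro CollectI exI[of _ "s+t"]) (simp add: scaleR_add_left distrib_right)
next
  fix x a r assume "(x, a) \<in> {(t *\<^sub>R x0, t * norm x0) |t. True}"
  then obtain s where "x = s *\<^sub>R x0" "a = s * norm x0" by auto
  then show "(r *\<^sub>R x, r * a) \<in> {(t *\<^sub>R x0, t * norm x0) |t. True}"
    by (intro CollectI exI[of _ "r * s"]) simp
next
  fix x a assume "(x, a) \<in> {(t *\<^sub>R x0, t * norm x0) |t. True}"
  then obtain s where "x = s *\<^sub>R x0" "a = s * norm x0" by auto
  then show "a \<le> norm x" by (simp add: mult_right_mono del: mult_le_cancel_right)
qed

lemma hb_zero: "hb_good x0 G \<Longrightarrow> (0, 0) \<in> G"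
  unfolding hb_good_def by (metis mult_zero_left scaleR_zero_left)

lemma hb_extend:
  fixes x0 :: "'a::real_normed_vector"
  assumes G: "hb_good x0 G" and y: "\<forall>a. (y, a) \<notin> G"
  shows "\<exists>G'. hb_good x0 G' \<and> G \<subseteq> G' \<and> G' \<noteq> G"
proof -
  have add: "\<And>x a z b. (x,a)\<in>G \<Longrightarrow> (z,b)\<in>G \<Longrightarrow> (x+z,a+b)\<in>G"
    and sc: "\<And>x a r. (x,a)\<in>G \<Longrightarrow> (r *\<^sub>R x, r*a)\<in>G"
    and fn: "\<And>x a b. (x,a)\<in>G \<Longrightarrow> (x,b)\<in>G \<Longrightarrow> a = b"
    and dom: "\<And>x a. (x,a)\<in>G \<Longrightarrow> a \<le> norm x"
    and x0: "(x0, norm x0) \<in> G"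
    using G unfolding hb_good_def by blast+
  define S where "S = {a - norm (u - y) | u a. (u,a) \<in> G}"
  have Sne: "S \<noteq> {}" using hb_zero[OF G] unfolding S_def by blast
  have Sub: "s \<le> norm (v + y) - b" if "s \<in> S" "(v,b)\<in>G" for s v b
  proof -
    obtain u a where s: "s = a - norm (u - y)" "(u,a)\<in>G" using \<open>s\<in>S\<close> unfolding S_def by blast
    have "a + b \<le> norm (u + v)" using dom[OF add[OF s(2) that(2)]] .
    also have "u + v = (u - y) + (v + y)" by simp
    also have "norm \<dots> \<le> norm (u - y) + norm (v + y)" by (rule norm_triangle_ineq)
    finally show ?thesis using s by simp
  qed
  have bdd: "bdd_above S" using Sub hb_zero[OF G] unfolding bdd_above_def by blast
  define c where "c = Sup S"
  have c1: "a - norm (u - y) \<le> c" if "(u,a)\<in>G" for u a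
    unfolding c_def by (rule cSup_upper[OF _ bdd]) (use that in \<open>auto simp: S_def\<close>)
  have c2: "c \<le> norm (v + y) - b" if "(v,b)\<in>G" for v b
    unfolding c_def by (rule cSup_least[OF Sne]) (use Sub that in auto)
  define G' where "G' = {(x + t *\<^sub>R y, a + t * c) | x a t. (x,a)\<in>G}"
  have GG': "G \<subseteq> G'" unfolding G'_def by force
  have yG': "(y, c) \<in> G'" unfolding G'_def using hb_zero[OF G]
    by (intro CollectI exI[of _ 0] exI[of _ 0] exI[of _ 1]) simp
  have "G' \<noteq> G" using yG' y by blast
  moreover have "hb_good x0 G'" unfolding hb_good_def
  proof (intro conjI allI impI)
    show "(x0, norm x0) \<in> G'" using GG' x0 by blast
  next
    fix x a b assume "(x, a) \<in> G'" "(x, b) \<in> G'"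
    then obtain x1 a1 t1 x2 a2 t2 where e: "x = x1 + t1 *\<^sub>R y" "a = a1 + t1 * c" "(x1,a1)\<in>G"
      "x = x2 + t2 *\<^sub>R y" "b = a2 + t2 * c" "(x2,a2)\<in>G" unfolding G'_def by blast
    have "t1 = t2"
    proof (rule ccontr)
      assume ne: "t1 \<noteq> t2"
      have eq: "x1 + t1 *\<^sub>R y = x2 + t2 *\<^sub>R y" using e by simp
      have x2: "x2 = x1 + (t1 - t2) *\<^sub>R y" using eq by (simp add: scaleR_diff_left algebra_simps)
      have m: "(x2 + (-1) *\<^sub>R x1, a2 + (-1) * a1) \<in> G" using add[OF e(6) sc[OF e(3)]] .
      have "(inverse (t1 - t2) *\<^sub>R (x2 + (-1) *\<^sub>R x1), inverse (t1 - t2) * (a2 + (-1) * a1)) \<in> G"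
        using sc[OF m] .
      moreover have "inverse (t1 - t2) *\<^sub>R (x2 + (-1) *\<^sub>R x1) = y"
        using ne by (simp add: x2)
      ultimately show False using y by auto
    qed
    then have "x1 = x2" using e by simp
    then have "a1 = a2" using fn e by blast
    then show "a = b" using e \<open>t1 = t2\<close> by simp
  next
    fix x a z b assume "(x, a) \<in> G'" "(z, b) \<in> G'"
    then obtain x1 a1 t1 x2 a2 t2 where e: "x = x1 + t1 *\<^sub>R y" "a = a1 + t1 * c" "(x1,a1)\<in>G"
      "z = x2 + t2 *\<^sub>R y" "b = a2 + t2 * c" "(x2,a2)\<in>G" unfolding G'_def by blast
    show "(x + z, a + b) \<in> G'" unfolding G'_def
      by (intro CollectI exI[of _ "x1+x2"] exI[of _ "a1+a2"] exI[of _ "t1+t2"])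
        (simp add: e add[OF e(3) e(6)] algebra_simps)
  next
    fix x a r assume "(x, a) \<in> G'"
    then obtain x1 a1 t1 where e: "x = x1 + t1 *\<^sub>R y" "a = a1 + t1 * c" "(x1,a1)\<in>G"
      unfolding G'_def by blast
    have "(r *\<^sub>R x, r * a) = (r *\<^sub>R x1 + (r*t1) *\<^sub>R y, r*a1 + (r*t1)*c)"
      using e by (simp add: algebra_simps)
    then show "(r *\<^sub>R x, r * a) \<in> G'" unfolding G'_def
      by (simp only:) (rule CollectI, intro exI conjI, rule refl, rule sc[OF e(3)])
  next
    fix x a assume "(x, a) \<in> G'"
    then obtain x1 a1 t where e: "x = x1 + t *\<^sub>R y" "a = a1 + t * c" "(x1,a1)\<in>G"
      unfolding G'_def by blast
    consider "t = 0" | "t > 0" | "t < 0" by linarith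
    then show "a \<le> norm x"
    proof cases
      case 1 then show ?thesis using e dom by simp
    next
      case 2
      have m: "(inverse t *\<^sub>R x1, inverse t * a1) \<in> G" using sc[OF e(3)] .
      have "c \<le> norm (inverse t *\<^sub>R x1 + y) - inverse t * a1" using c2[OF m] .
      then have "t * c \<le> t * (norm (inverse t *\<^sub>R x1 + y) - inverse t * a1)"
        using 2 by (simp add: mult_left_mono)
      also have "\<dots> = norm (t *\<^sub>R (inverse t *\<^sub>R x1 + y)) - a1" using 2
        by (simp add: right_diff_distrib)
      also have "t *\<^sub>R (inverse t *\<^sub>R x1 + y) = x" using 2 e by (simp add: scaleR_add_right)
      finally show ?thesis using e by simp
    next
      case 3
      define s where "s = - t"
      have s: "s > 0" using 3 s_def by simp
      have m: "(inverse s *\<^sub>R x1, inverse s * a1) \<in> G" using sc[OF e(3)] .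
      have "inverse s * a1 - norm (inverse s *\<^sub>R x1 - y) \<le> c" using c1[OF m] .
      then have "s * (inverse s * a1 - norm (inverse s *\<^sub>R x1 - y)) \<le> s * c"
        using s by (simp add: mult_left_mono)
      also have "s * (inverse s * a1 - norm (inverse s *\<^sub>R x1 - y)) = a1 - norm (s *\<^sub>R (inverse s *\<^sub>R x1 - y))"
        using s by (simp add: right_diff_distrib)
      also have "s *\<^sub>R (inverse s *\<^sub>R x1 - y) = x" using s e s_def by (simp add: scaleR_diff_right)
      finally show ?thesis using e s_def by simp
    qed
  qed
  ultimately show ?thesis using GG' by blast
qed

lemma hahn_banach_norming:
  fixes x0 :: "'a::real_normed_vector"
  shows "\<exists>h::'a \<Rightarrow>\<^sub>L real. blinfun_apply h x0 = norm x0 \<and> norm h \<le> 1"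
proof (cases "x0 = 0")
  case True then show ?thesis by (intro exI[of _ 0]) simp
next
  case False
  let ?A = "{G. hb_good x0 G}"
  have "\<forall>C\<in>chains ?A. \<exists>U\<in>?A. \<forall>X\<in>C. X \<subseteq> U"
  proof
    fix C assume C: "C \<in> chains ?A"
    show "\<exists>U\<in>?A. \<forall>X\<in>C. X \<subseteq> U"
    proof (cases "C = {}")
      case True then show ?thesis using hb_base[OF False] by blast
    next
      case False then show ?thesis using hb_chain[OF C False] by blast
    qed
  qed
  from Zorn_Lemma2[OF this] obtain M where M: "hb_good x0 M" and max: "\<And>X. hb_good x0 X \<Longrightarrow> M \<subseteq> X \<Longrightarrow> X = M"
    by blast
  have tot: "\<exists>a. (x, a) \<in> M" for x
    using hb_extend[OF M, of x] max by blast
  have add: "\<And>x a z b. (x,a)\<in>M \<Longrightarrow> (z,b)\<in>M \<Longrightarrow> (x+z,a+b)\<in>M"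
    and sc: "\<And>x a r. (x,a)\<in>M \<Longrightarrow> (r *\<^sub>R x, r*a)\<in>M"
    and fn: "\<And>x a b. (x,a)\<in>M \<Longrightarrow> (x,b)\<in>M \<Longrightarrow> a = b"
    and dom: "\<And>x a. (x,a)\<in>M \<Longrightarrow> a \<le> norm x"
    and x0: "(x0, norm x0) \<in> M"
    using M unfolding hb_good_def by blast+
  define h where "h x = (THE a. (x, a) \<in> M)" for x
  have hM: "(x, h x) \<in> M" for x
    unfolding h_def using tot[of x] fn by (metis theI)
  have hv: "(x, a) \<in> M \<Longrightarrow> h x = a" for x a using hM fn by blast
  have lin: "linear h"
  proof
    show "h (x + z) = h x + h z" for x z using hv[OF add[OF hM hM]] .
    show "h (r *\<^sub>R x) = r *\<^sub>R h x" for r x using hv[OF sc[OF hM]] by simp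
  qed
  have bnd: "\<bar>h x\<bar> \<le> norm x" for x
  proof -
    have "h x \<le> norm x" using dom[OF hM] .
    moreover have "h ((-1) *\<^sub>R x) = - h x" using hv[OF sc[OF hM[of x], of "-1"]] by simp
    then have "- h x \<le> norm x" using dom[OF hM[of "(-1) *\<^sub>R x"]] by simp
    ultimately show ?thesis by linarith
  qed
  have bl: "bounded_linear h"
    using lin bnd by (intro bounded_linear_intro[of _ 1]) (auto simp: linear_add linear_scale)
  show ?thesis
  proof (intro exI[of _ "Blinfun h"] conjI)
    show "blinfun_apply (Blinfun h) x0 = norm x0" using bounded_linear_Blinfun_apply[OF bl] hv[OF x0] by simp
    show "norm (Blinfun h) \<le> 1"
      by (rule norm_blinfun_bound) (use bounded_linear_Blinfun_apply[OF bl] bnd in auto)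
  qed
qed



lemma sum_delta: "(\<Sum>i<n. a i * \<delta> i j) = (if j < n then a j else 0)"
  by (induction n) (auto simp: canon_vec_def less_Suc_eq)

lemma BK_add: "BK_space L N \<Longrightarrow> c \<in> L \<Longrightarrow> d \<in> L \<Longrightarrow> (\<lambda>i. c i + d i) \<in> L"
  unfolding BK_space_def by blast
lemma BK_scale: "BK_space L N \<Longrightarrow> c \<in> L \<Longrightarrow> (\<lambda>i. a * c i) \<in> L"
  unfolding BK_space_def by blast
lemma BK_zero: "BK_space L N \<Longrightarrow> (\<lambda>_. 0) \<in> L"
  unfolding BK_space_def by blast
lemma BK_nonneg: "BK_space L N \<Longrightarrow> c \<in> L \<Longrightarrow> 0 \<le> N c"
  unfolding BK_space_def by blast

lemma BK_diff: assumes "BK_space L N" "c \<in> L" "d \<in> L" shows "(\<lambda>j. c j - d j) \<in> L"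
  using BK_add[OF assms(1,2) BK_scale[OF assms(1,3), of "-1"]] by simp

lemma BK_ps: assumes "BK_space L N" "\<forall>i. \<delta> i \<in> L" shows "(\<lambda>j. \<Sum>i<n. a i * \<delta> i j) \<in> L"
proof (induction n)
  case 0 then show ?case using BK_zero[OF assms(1)] by simp
next
  case (Suc n)
  have "(\<lambda>j. (\<Sum>i<n. a i * \<delta> i j) + a n * \<delta> n j) \<in> L"
    using BK_add[OF assms(1) Suc BK_scale[OF assms(1), of "\<delta> n" "a n"]] assms(2) by simp
  then show ?case by simp
qed

lemma phi_sums:
  assumes S: "Schauder_seq_space L N"
    and add: "\<forall>c\<in>L. \<forall>c'\<in>L. \<phi> (\<lambda>i. c i + c' i) = \<phi> c + \<phi> c'"
    and sc: "\<forall>c\<in>L. \<forall>a. \<phi> (\<lambda>i. a * c i) = a * \<phi> c"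
    and K: "\<forall>c\<in>L. \<bar>\<phi> c\<bar> \<le> K * N c" and e: "e \<in> L"
  shows "(\<lambda>i. \<phi> (\<delta> i) * e i) sums \<phi> e"
proof -
  have BK: "BK_space L N" and dl: "\<forall>i. \<delta> i \<in> L"
    and lim: "(\<lambda>n. N (\<lambda>j. e j - (\<Sum>i<n. e i * \<delta> i j))) \<longlonglongrightarrow> 0"
    using S e unfolding Schauder_seq_space_def by blast+
  define p where "p n = (\<lambda>j. \<Sum>i<n. e i * \<delta> i j)" for n
  have pL: "p n \<in> L" for n unfolding p_def by (rule BK_ps[OF BK dl])
  have pv: "\<phi> (p n) = (\<Sum>i<n. \<phi> (\<delta> i) * e i)" for n
  proof (induction n)
    case 0
    have "p 0 = (\<lambda>i. 0 * p 0 i)" by (simp add: p_def)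
    then have "\<phi> (p 0) = 0 * \<phi> (p 0)" using sc pL by metis
    then show ?case by simp
  next
    case (Suc n)
    have "p (Suc n) = (\<lambda>j. p n j + e n * \<delta> n j)" by (simp add: p_def)
    moreover have "(\<lambda>j. e n * \<delta> n j) \<in> L" using BK dl unfolding BK_space_def by blast
    ultimately have "\<phi> (p (Suc n)) = \<phi> (p n) + \<phi> (\<lambda>j. e n * \<delta> n j)" using add pL by simp
    also have "\<phi> (\<lambda>j. e n * \<delta> n j) = e n * \<phi> (\<delta> n)" using sc dl by blast
    finally show ?case using Suc by simp
  qed
  define r where "r n = (\<lambda>j. e j - p n j)" for n
  have rL: "r n \<in> L" for n unfolding r_def by (rule BK_diff[OF BK e pL])
  have "e = (\<lambda>j. p n j + r n j)" for n by (simp add: r_def)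
  then have dec: "\<phi> e = \<phi> (p n) + \<phi> (r n)" for n using add pL rL by metis
  have "(\<lambda>n. K * N (r n)) \<longlonglongrightarrow> 0" using tendsto_mult_right_zero[OF lim, of K] by (simp add: r_def p_def)
  then have "(\<lambda>n. \<phi> (r n)) \<longlonglongrightarrow> 0"
    by (rule Lim_null_comparison[rotated]) (use K rL in auto)
  then have "(\<lambda>n. \<phi> e - \<phi> (r n)) \<longlonglongrightarrow> \<phi> e - 0" by (intro tendsto_intros)
  moreover have "(\<lambda>n. \<phi> e - \<phi> (r n)) = (\<lambda>n. \<phi> (p n))"
  proof
    fix n show "\<phi> e - \<phi> (r n) = \<phi> (p n)" using dec[of n] by linarith
  qed
  ultimately have "(\<lambda>n. \<phi> (p n)) \<longlonglongrightarrow> \<phi> e" by (metis diff_zero)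
  then show ?thesis unfolding sums_def using pv by simp
qed

lemma pair:
  assumes S: "Schauder_seq_space L N" and d: "d \<in> dual_seq L N" and e: "e \<in> L"
  shows "summable (\<lambda>i. d i * e i) \<and> \<bar>\<Sum>i. d i * e i\<bar> \<le> dual_norm L N d * N e"
proof -
  obtain \<phi> K where add: "\<forall>c\<in>L. \<forall>c'\<in>L. \<phi> (\<lambda>i. c i + c' i) = \<phi> c + \<phi> c'"
    and sc: "\<forall>c\<in>L. \<forall>a. \<phi> (\<lambda>i. a * c i) = a * \<phi> c"
    and K: "\<forall>c\<in>L. \<bar>\<phi> c\<bar> \<le> K * N c" and dv: "\<forall>i. \<phi> (\<delta> i) = d i"
    using d unfolding dual_seq_def by blast
  have BK: "BK_space L N" using S unfolding Schauder_seq_space_def by blast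
  have ps: "(\<lambda>i. d i * c i) sums \<phi> c" if "c \<in> L" for c
    using phi_sums[OF S add sc K that] dv by simp
  have val: "(\<Sum>i. d i * c i) = \<phi> c" if "c \<in> L" for c using ps[OF that] by (rule sums_unique[symmetric])
  have bdd: "bdd_above ((\<lambda>c. \<bar>\<Sum>i. d i * c i\<bar>) ` {c\<in>L. N c \<le> 1})"
  proof (rule bdd_aboveI2)
    fix c assume c: "c \<in> {c\<in>L. N c \<le> 1}"
    have Nc: "0 \<le> N c" using BK c unfolding BK_space_def by blast
    have "\<bar>\<Sum>i. d i * c i\<bar> = \<bar>\<phi> c\<bar>" using c val by simp
    also have "\<dots> \<le> K * N c" using K c by blast
    also have "\<dots> \<le> \<bar>K\<bar> * N c" using Nc by (simp add: mult_right_mono)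
    also have "\<dots> \<le> \<bar>K\<bar>" using c Nc by (simp add: mult_left_le)
    finally show "\<bar>\<Sum>i. d i * c i\<bar> \<le> \<bar>K\<bar>" .
  qed
  have "\<bar>\<phi> e\<bar> \<le> dual_norm L N d * N e"
  proof (cases "N e = 0")
    case True
    then have "e = (\<lambda>_. 0)" using BK e unfolding BK_space_def by blast
    then have "e = (\<lambda>i. 0 * e i)" by simp
    then have "\<phi> e = 0 * \<phi> e" using sc e by metis
    then show ?thesis using True by simp
  next
    case False
    have Ne: "N e > 0" using False BK e unfolding BK_space_def by force
    define c where "c = (\<lambda>i. (1 / N e) * e i)"
    have cL: "c \<in> L" using BK e unfolding BK_space_def c_def by blast
    have "N c = \<bar>1 / N e\<bar> * N e" using BK e unfolding BK_space_def c_def by blast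
    moreover have "\<bar>1 / N e\<bar> * N e = 1" using Ne by simp
    ultimately have Nc: "N c = 1" by linarith
    have "\<phi> c = (1 / N e) * \<phi> e" using sc e unfolding c_def by blast
    then have "\<bar>\<phi> e\<bar> / N e = \<bar>\<Sum>i. d i * c i\<bar>" using val[OF cL] Ne by (simp add: abs_mult)
    also have "\<dots> \<le> dual_norm L N d" unfolding dual_norm_def
      by (rule cSUP_upper[OF _ bdd]) (use cL Nc in simp)
    finally show ?thesis using Ne by (simp add: divide_le_eq)
  qed
  then show ?thesis using ps[OF e] val[OF e] sums_summable by metis
qed

lemma tail_sums:
  fixes f :: "nat \<Rightarrow> real"
  assumes "f sums s" shows "(\<lambda>j. if j < n then 0 else f j) sums (s - (\<Sum>i<n. f i))"
proof -
  have "(\<lambda>j. if j \<in> {..<n} then f j else 0) sums (\<Sum>i\<in>{..<n}. f i)" by (rule sums_If_finite_set) simp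
  from sums_diff[OF assms this] show ?thesis by (simp add: if_distrib cong: if_cong)
qed

lemma tail_bound_d:
  assumes S: "Schauder_seq_space L N" and S2: "Schauder_seq_space (dual_seq L N) (dual_norm L N)"
    and d: "d \<in> dual_seq L N" and e: "e \<in> L" and s: "(\<lambda>i. d i * e i) sums s"
  shows "\<bar>s - (\<Sum>i<n. d i * e i)\<bar> \<le> dual_norm L N (\<lambda>j. d j - (\<Sum>i<n. d i * \<delta> i j)) * N e"
proof -
  let ?r = "\<lambda>j. d j - (\<Sum>i<n. d i * \<delta> i j)"
  have BK: "BK_space (dual_seq L N) (dual_norm L N)" and dl: "\<forall>i. \<delta> i \<in> dual_seq L N"
    using S2 unfolding Schauder_seq_space_def by blast+
  have rL: "?r \<in> dual_seq L N" by (rule BK_diff[OF BK d BK_ps[OF BK dl]])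
  have eq: "(\<lambda>j. ?r j * e j) = (\<lambda>j. if j < n then 0 else d j * e j)"
  proof (rule ext)
    fix j show "?r j * e j = (if j < n then 0 else d j * e j)"
      unfolding sum_delta by (cases "j < n") simp_all
  qed
  have "(\<lambda>j. ?r j * e j) sums (s - (\<Sum>i<n. d i * e i))" unfolding eq by (rule tail_sums[OF s])
  then have u: "(\<Sum>j. ?r j * e j) = s - (\<Sum>i<n. d i * e i)" by (rule sums_unique[symmetric])
  have p: "\<bar>\<Sum>j. ?r j * e j\<bar> \<le> dual_norm L N ?r * N e" using pair[OF S rL e] by (rule conjunct2)
  show ?thesis using p unfolding u .
qed

lemma tail_bound_e:
  assumes S: "Schauder_seq_space L N"
    and d: "d \<in> dual_seq L N" and e: "e \<in> L" and s: "(\<lambda>i. d i * e i) sums s"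
  shows "\<bar>s - (\<Sum>i<n. d i * e i)\<bar> \<le> dual_norm L N d * N (\<lambda>j. e j - (\<Sum>i<n. e i * \<delta> i j))"
proof -
  let ?r = "\<lambda>j. e j - (\<Sum>i<n. e i * \<delta> i j)"
  have BK: "BK_space L N" and dl: "\<forall>i. \<delta> i \<in> L"
    using S unfolding Schauder_seq_space_def by blast+
  have rL: "?r \<in> L" by (rule BK_diff[OF BK e BK_ps[OF BK dl]])
  have eq: "(\<lambda>j. d j * ?r j) = (\<lambda>j. if j < n then 0 else d j * e j)"
  proof (rule ext)
    fix j show "d j * ?r j = (if j < n then 0 else d j * e j)"
      unfolding sum_delta by (cases "j < n") simp_all
  qed
  have "(\<lambda>j. d j * ?r j) sums (s - (\<Sum>i<n. d i * e i))" unfolding eq by (rule tail_sums[OF s])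
  then have u: "(\<Sum>j. d j * ?r j) = s - (\<Sum>i<n. d i * e i)" by (rule sums_unique[symmetric])
  have p: "\<bar>\<Sum>j. d j * ?r j\<bar> \<le> dual_norm L N d * N ?r" using pair[OF S d rL] by (rule conjunct2)
  show ?thesis using p unfolding u .
qed



lemma fwd:
  fixes f :: "nat \<Rightarrow> 'a::real_normed_vector" and g :: "nat \<Rightarrow> ('a \<Rightarrow>\<^sub>L real)"
  assumes S: "Schauder_seq_space L N"
    and S2: "Schauder_seq_space (dual_seq L N) (dual_norm L N)"
    and X: "atomic_decomp_X L N (dual_seq L N) (dual_norm L N) g f"
  shows "atomic_decomp_dual (dual_seq L N) (dual_norm L N) L N f g"
proof -
  obtain A B where AB: "A > 0" "B > 0" and hx: "\<And>x. (\<lambda>i. blinfun_apply (g i) x) \<in> L \<and>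
      A * norm x \<le> N (\<lambda>i. blinfun_apply (g i) x) \<and> N (\<lambda>i. blinfun_apply (g i) x) \<le> B * norm x \<and>
      (\<lambda>i. blinfun_apply (g i) x *\<^sub>R f i) sums x"
    using X unfolding atomic_decomp_X_def by blast
  obtain B' where B': "B' > 0" and hb: "\<And>h::'a \<Rightarrow>\<^sub>L real. (\<lambda>i. blinfun_apply h (f i)) \<in> dual_seq L N \<and>
      dual_norm L N (\<lambda>i. blinfun_apply h (f i)) \<le> B' * norm h"
    using X unfolding atomic_decomp_X_def by blast
  have BK2: "BK_space (dual_seq L N) (dual_norm L N)" and dl2: "\<forall>i. \<delta> i \<in> dual_seq L N"
    using S2 unfolding Schauder_seq_space_def by blast+
  have hsum: "(\<lambda>i. blinfun_apply h (f i) * blinfun_apply (g i) x) sums blinfun_apply h x"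
    for h :: "'a \<Rightarrow>\<^sub>L real" and x
  proof -
    have "(\<lambda>i. blinfun_apply h (blinfun_apply (g i) x *\<^sub>R f i)) sums blinfun_apply h x"
      using bounded_linear.sums[OF blinfun.bounded_linear_right] hx[of x] by blast
    then show ?thesis by (simp add: blinfun.scaleR_right mult.commute)
  qed
  have main: "(\<lambda>i. blinfun_apply h (f i)) \<in> dual_seq L N \<and>
             (1 / B) * norm h \<le> dual_norm L N (\<lambda>i. blinfun_apply h (f i)) \<and>
             dual_norm L N (\<lambda>i. blinfun_apply h (f i)) \<le> B' * norm h \<and>
             (\<lambda>i. blinfun_apply h (f i) *\<^sub>R g i) sums h" for h :: "'a \<Rightarrow>\<^sub>L real"
  proof -
    let ?d = "\<lambda>i. blinfun_apply h (f i)"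
    have dL: "?d \<in> dual_seq L N" and up: "dual_norm L N ?d \<le> B' * norm h" using hb[of h] by blast+
    have dn: "0 \<le> dual_norm L N ?d" by (rule BK_nonneg[OF BK2 dL])
    have low: "norm h \<le> B * dual_norm L N ?d"
    proof (rule norm_blinfun_bound)
      show "0 \<le> B * dual_norm L N ?d" using AB dn by simp
      fix x
      let ?e = "\<lambda>i. blinfun_apply (g i) x"
      have eL: "?e \<in> L" and Ne: "N ?e \<le> B * norm x" using hx[of x] by blast+
      have "\<bar>\<Sum>i. ?d i * ?e i\<bar> \<le> dual_norm L N ?d * N ?e" using pair[OF S dL eL] by (rule conjunct2)
      moreover have "(\<Sum>i. ?d i * ?e i) = blinfun_apply h x" using hsum[of h x] by (rule sums_unique[symmetric])
      ultimately have "\<bar>blinfun_apply h x\<bar> \<le> dual_norm L N ?d * N ?e" by simp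
      also have "\<dots> \<le> dual_norm L N ?d * (B * norm x)" by (rule mult_left_mono[OF Ne dn])
      finally show "norm (blinfun_apply h x) \<le> B * dual_norm L N ?d * norm x" by (simp add: mult_ac)
    qed
    then have lowB: "(1 / B) * norm h \<le> dual_norm L N ?d" using AB by (simp add: field_simps)
    have sm: "(\<lambda>i. ?d i *\<^sub>R g i) sums h"
      unfolding sums_def
    proof (rule LIM_zero_cancel)
      let ?r = "\<lambda>n j. ?d j - (\<Sum>i<n. ?d i * \<delta> i j)"
      have sch: "\<forall>c\<in>dual_seq L N. (\<lambda>n. dual_norm L N (\<lambda>j. c j - (\<Sum>i<n. c i * \<delta> i j))) \<longlonglongrightarrow> 0"
        using S2 unfolding Schauder_seq_space_def by blast
      have lim: "(\<lambda>n. dual_norm L N (?r n)) \<longlonglongrightarrow> 0" using bspec[OF sch dL] by simp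
      have rL: "?r n \<in> dual_seq L N" for n by (rule BK_diff[OF BK2 dL BK_ps[OF BK2 dl2]])
      show "(\<lambda>n. (\<Sum>i<n. ?d i *\<^sub>R g i) - h) \<longlonglongrightarrow> 0"
      proof (rule Lim_null_comparison[OF _ tendsto_mult_right_zero[OF lim, of B]])
        show "\<forall>\<^sub>F n in sequentially. norm ((\<Sum>i<n. ?d i *\<^sub>R g i) - h) \<le> B * dual_norm L N (?r n)"
        proof (rule always_eventually, rule allI)
          fix n
          show "norm ((\<Sum>i<n. ?d i *\<^sub>R g i) - h) \<le> B * dual_norm L N (?r n)"
          proof (rule norm_blinfun_bound)
            show "0 \<le> B * dual_norm L N (?r n)" using AB BK_nonneg[OF BK2 rL[of n]] by simp
            fix x
            let ?e = "\<lambda>i. blinfun_apply (g i) x"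
            have eL: "?e \<in> L" and Ne: "N ?e \<le> B * norm x" using hx[of x] by blast+
            have ap: "blinfun_apply ((\<Sum>i<n. ?d i *\<^sub>R g i) - h) x = (\<Sum>i<n. ?d i * ?e i) - blinfun_apply h x"
              by (simp add: blinfun.diff_left blinfun.sum_left blinfun.scaleR_left)
            have "\<bar>blinfun_apply h x - (\<Sum>i<n. ?d i * ?e i)\<bar> \<le> dual_norm L N (?r n) * N ?e"
              by (rule tail_bound_d[OF S S2 dL eL hsum])
            also have "\<dots> \<le> dual_norm L N (?r n) * (B * norm x)"
              by (rule mult_left_mono[OF Ne BK_nonneg[OF BK2 rL[of n]]])
            finally show "norm (blinfun_apply ((\<Sum>i<n. ?d i *\<^sub>R g i) - h) x) \<le> B * dual_norm L N (?r n) * norm x"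
              unfolding ap by (simp add: mult_ac abs_minus_commute)
          qed
        qed
      qed
    qed
    show ?thesis using dL lowB up sm by blast
  qed
  show ?thesis unfolding atomic_decomp_dual_def
  proof (intro conjI exI)
    show "1 / B > 0" "B' > 0" using AB B' by simp_all
    show "\<forall>h::'a \<Rightarrow>\<^sub>L real. (\<lambda>i. blinfun_apply h (f i)) \<in> dual_seq L N \<and>
             1 / B * norm h \<le> dual_norm L N (\<lambda>i. blinfun_apply h (f i)) \<and>
             dual_norm L N (\<lambda>i. blinfun_apply h (f i)) \<le> B' * norm h \<and>
             (\<lambda>i. blinfun_apply h (f i) *\<^sub>R g i) sums h" using main by blast
    show "B > 0" using AB by simp
    show "\<forall>x. (\<lambda>i. blinfun_apply (g i) x) \<in> L \<and> N (\<lambda>i. blinfun_apply (g i) x) \<le> B * norm x"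
      using hx by blast
  qed
qed

lemma bwd:
  fixes f :: "nat \<Rightarrow> 'a::real_normed_vector" and g :: "nat \<Rightarrow> ('a \<Rightarrow>\<^sub>L real)"
  assumes S: "Schauder_seq_space L N"
    and D: "atomic_decomp_dual (dual_seq L N) (dual_norm L N) L N f g"
  shows "atomic_decomp_X L N (dual_seq L N) (dual_norm L N) g f"
proof -
  obtain A B where AB: "A > 0" "B > 0" and hd: "\<And>h::'a \<Rightarrow>\<^sub>L real. (\<lambda>i. blinfun_apply h (f i)) \<in> dual_seq L N \<and>
      A * norm h \<le> dual_norm L N (\<lambda>i. blinfun_apply h (f i)) \<and> dual_norm L N (\<lambda>i. blinfun_apply h (f i)) \<le> B * norm h \<and>
      (\<lambda>i. blinfun_apply h (f i) *\<^sub>R g i) sums h"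
    using D unfolding atomic_decomp_dual_def by blast
  obtain B' where B': "B' > 0" and hg: "\<And>x. (\<lambda>i. blinfun_apply (g i) x) \<in> L \<and> N (\<lambda>i. blinfun_apply (g i) x) \<le> B' * norm x"
    using D unfolding atomic_decomp_dual_def by blast
  have BK: "BK_space L N" and dl: "\<forall>i. \<delta> i \<in> L"
    using S unfolding Schauder_seq_space_def by blast+
  have hsum: "(\<lambda>i. blinfun_apply h (f i) * blinfun_apply (g i) x) sums blinfun_apply h x"
    for h :: "'a \<Rightarrow>\<^sub>L real" and x
  proof -
    have "(\<lambda>i. blinfun_apply (blinfun_apply h (f i) *\<^sub>R g i) x) sums blinfun_apply h x"
      using bounded_linear.sums[OF blinfun.bounded_linear_left] hd[of h] by blast
    then show ?thesis by (simp add: blinfun.scaleR_left)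
  qed
  have key: "\<bar>blinfun_apply h x - (\<Sum>i<n. blinfun_apply h (f i) * blinfun_apply (g i) x)\<bar>
      \<le> B * N (\<lambda>j. blinfun_apply (g j) x - (\<Sum>i<n. blinfun_apply (g i) x * \<delta> i j))"
    if nh: "norm h \<le> 1" for h :: "'a \<Rightarrow>\<^sub>L real" and x n
  proof -
    let ?d = "\<lambda>i. blinfun_apply h (f i)"
    let ?e = "\<lambda>i. blinfun_apply (g i) x"
    let ?r = "\<lambda>j. ?e j - (\<Sum>i<n. ?e i * \<delta> i j)"
    have dL: "?d \<in> dual_seq L N" and up: "dual_norm L N ?d \<le> B * norm h" using hd[of h] by blast+
    have eL: "?e \<in> L" using hg[of x] by blast
    have rL: "?r \<in> L" by (rule BK_diff[OF BK eL BK_ps[OF BK dl]])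
    have Nr: "0 \<le> N ?r" by (rule BK_nonneg[OF BK rL])
    have "\<bar>blinfun_apply h x - (\<Sum>i<n. ?d i * ?e i)\<bar> \<le> dual_norm L N ?d * N ?r"
      by (rule tail_bound_e[OF S dL eL hsum])
    also have "\<dots> \<le> (B * norm h) * N ?r" by (rule mult_right_mono[OF up Nr])
    also have "\<dots> = B * (norm h * N ?r)" by simp
    also have "\<dots> \<le> B * N ?r" using nh AB Nr by (intro mult_left_mono mult_left_le_one_le) simp_all
    finally show ?thesis .
  qed
  have main: "(\<lambda>i. blinfun_apply (g i) x) \<in> L \<and>
      (1 / B) * norm x \<le> N (\<lambda>i. blinfun_apply (g i) x) \<and> N (\<lambda>i. blinfun_apply (g i) x) \<le> B' * norm x \<and>
      (\<lambda>i. blinfun_apply (g i) x *\<^sub>R f i) sums x" for x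
  proof -
    let ?e = "\<lambda>i. blinfun_apply (g i) x"
    have eL: "?e \<in> L" and up: "N ?e \<le> B' * norm x" using hg[of x] by blast+
    have lowB: "norm x \<le> B * N ?e"
    proof -
      obtain h :: "'a \<Rightarrow>\<^sub>L real" where h: "blinfun_apply h x = norm x" "norm h \<le> 1"
        using hahn_banach_norming by blast
      have "norm x \<le> \<bar>blinfun_apply h x - (\<Sum>i<0. blinfun_apply h (f i) * ?e i)\<bar>" using h by simp
      also have "\<dots> \<le> B * N (\<lambda>j. ?e j - (\<Sum>i<0. ?e i * \<delta> i j))" by (rule key[OF h(2)])
      finally show ?thesis by simp
    qed
    then have low: "(1 / B) * norm x \<le> N ?e" using AB by (simp add: field_simps)
    have sm: "(\<lambda>i. ?e i *\<^sub>R f i) sums x"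
      unfolding sums_def
    proof (rule LIM_zero_cancel)
      let ?r = "\<lambda>n j. ?e j - (\<Sum>i<n. ?e i * \<delta> i j)"
      have sch: "\<forall>c\<in>L. (\<lambda>n. N (\<lambda>j. c j - (\<Sum>i<n. c i * \<delta> i j))) \<longlonglongrightarrow> 0"
        using S unfolding Schauder_seq_space_def by blast
      have lim: "(\<lambda>n. N (?r n)) \<longlonglongrightarrow> 0" using bspec[OF sch eL] by simp
      show "(\<lambda>n. (\<Sum>i<n. ?e i *\<^sub>R f i) - x) \<longlonglongrightarrow> 0"
      proof (rule Lim_null_comparison[OF _ tendsto_mult_right_zero[OF lim, of B]])
        show "\<forall>\<^sub>F n in sequentially. norm ((\<Sum>i<n. ?e i *\<^sub>R f i) - x) \<le> B * N (?r n)"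
        proof (rule always_eventually, rule allI)
          fix n
          let ?v = "(\<Sum>i<n. ?e i *\<^sub>R f i) - x"
          obtain h :: "'a \<Rightarrow>\<^sub>L real" where h: "blinfun_apply h ?v = norm ?v" "norm h \<le> 1"
            using hahn_banach_norming by blast
          have ap: "blinfun_apply h ?v = (\<Sum>i<n. blinfun_apply h (f i) * ?e i) - blinfun_apply h x"
            by (simp add: blinfun.diff_right blinfun.sum_right blinfun.scaleR_right mult.commute)
          have "norm ?v = \<bar>blinfun_apply h x - (\<Sum>i<n. blinfun_apply h (f i) * ?e i)\<bar>"
            using h(1) unfolding ap by (metis abs_minus_commute abs_norm_cancel)
          also have "\<dots> \<le> B * N (?r n)" by (rule key[OF h(2)])
          finally show "norm ?v \<le> B * N (?r n)" .
        qed
      qed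
    qed
    show ?thesis using eL low up sm by blast
  qed
  show ?thesis unfolding atomic_decomp_X_def
  proof (intro conjI exI)
    show "1 / B > 0" "B' > 0" using AB B' by simp_all
    show "\<forall>x. (\<lambda>i. blinfun_apply (g i) x) \<in> L \<and>
      (1 / B) * norm x \<le> N (\<lambda>i. blinfun_apply (g i) x) \<and> N (\<lambda>i. blinfun_apply (g i) x) \<le> B' * norm x \<and>
      (\<lambda>i. blinfun_apply (g i) x *\<^sub>R f i) sums x" using main by blast
    show "B > 0" using AB by simp
    show "\<forall>h::'a \<Rightarrow>\<^sub>L real. (\<lambda>i. blinfun_apply h (f i)) \<in> dual_seq L N \<and>
        dual_norm L N (\<lambda>i. blinfun_apply h (f i)) \<le> B * norm h" using hd by blast
  qed
qed

theorem mainTheorem9: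
  fixes L :: "(nat \<Rightarrow> real) set" and N :: "(nat \<Rightarrow> real) \<Rightarrow> real"
    and f :: "nat \<Rightarrow> 'a::banach" and g :: "nat \<Rightarrow> ('a \<Rightarrow>\<^sub>L real)"
  assumes "reflexive_space TYPE('a)"
    and "Schauder_seq_space L N"
    and "Schauder_seq_space (dual_seq L N) (dual_norm L N)"
  shows "atomic_decomp_X L N (dual_seq L N) (dual_norm L N) g f \<longleftrightarrow>
         atomic_decomp_dual (dual_seq L N) (dual_norm L N) L N f g"
  using fwd[OF assms(2,3)] bwd[OF assms(2)] by blast

end
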